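(* Let $E$ be a finite-dimensional real Euclidean space with inner product $\langle\cdot,\cdot\rangle$, let $\|\cdot\|_{(1)},\dots,\|\cdot\|_{(n)}$ be norms on $E$, and let $\alpha_1,\dots,\alpha_n\ge 0$, not all zero. For each $i$ let $\mathrm{LMO}_i$ be a linear minimization oracle for the unit ball of $\|\cdot\|_{(i)}$, i.e. $\mathrm{LMO}_i(\mathbf{M})\in\arg\min_{\|\mathbf{D}\|_{(i)}\le 1}\langle\mathbf{M},\mathbf{D}\rangle$ for every $\mathbf{M}\in E$. Let $\|\cdot\|$ be the norm dual to the norm $\sum_{i=1}^n\alpha_i\|\cdot\|_{(i)}^\dagger$. Then for every $\mathbf{M}\in E$, $$\sum_{i=1}^n\alpha_i\,\mathrm{LMO}_i(\mathbf{M})\in\arg\min_{\|\mathbf{D}\|\le 1}\langle\mathbf{M},\mathbf{D}\rangle,$$ i.e. $\sum_{i=1}^n\alpha_i\mathrm{LMO}_i$ is a linear minimization oracle for the unit ball of $\|\cdot\|$.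
   Context: For a norm $\|\cdot\|$ on $E$, its dual norm is $\|\mathbf{M}\|^\dagger=\sup_{\|\mathbf{D}\|\le1}\langle\mathbf{M},\mathbf{D}\rangle$. *)

theory Defs
  imports "HOL-Analysis.Analysis"
begin

definition is_norm :: "('a::real_vector \<Rightarrow> real) \<Rightarrow> bool" where
  "is_norm N \<longleftrightarrow>
     (\<forall>x. 0 \<le> N x) \<and> (\<forall>x. N x = 0 \<longleftrightarrow> x = 0) \<and>
     (\<forall>c x. N (scaleR c x) = \<bar>c\<bar> * N x) \<and>
     (\<forall>x y. N (x + y) \<le> N x + N y)"

definition dual_norm :: "('a::real_inner \<Rightarrow> real) \<Rightarrow> 'a \<Rightarrow> real" where
  "dual_norm N M = (SUP D\<in>{D. N D \<le> 1}. inner M D)"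

definition is_argmin_ball :: "('a::real_inner \<Rightarrow> real) \<Rightarrow> 'a \<Rightarrow> 'a \<Rightarrow> bool" where
  "is_argmin_ball N M X \<longleftrightarrow> N X \<le> 1 \<and> (\<forall>D. N D \<le> 1 \<longrightarrow> inner M X \<le> inner M D)"

end

theory Submission
  imports Defs
begin

lemma norm_zero_is: "is_norm N \<Longrightarrow> N 0 = 0"
  unfolding is_norm_def by auto

lemma dual_bdd:
  assumes "is_norm N" "\<And>M'. is_argmin_ball N M' (L M')"
  shows "bdd_above ((\<lambda>D. inner Y D) ` {D. N D \<le> 1})"
proof (rule bdd_aboveI2)
  fix D assume "D \<in> {D. N D \<le> 1}"
  then have "inner (-Y) (L (-Y)) \<le> inner (-Y) D"
    using assms(2)[of "-Y"] unfolding is_argmin_ball_def by auto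
  then show "inner Y D \<le> - inner (-Y) (L (-Y))" by simp
qed

lemma dual_upper:
  assumes "is_norm N" "\<And>M'. is_argmin_ball N M' (L M')" "N D \<le> 1"
  shows "inner Y D \<le> dual_norm N Y"
  unfolding dual_norm_def
  by (rule cSUP_upper) (use assms dual_bdd[OF assms(1,2)] in auto)

lemma dual_neg:
  assumes "is_norm N" "\<And>M'. is_argmin_ball N M' (L M')"
  shows "dual_norm N (-M) = - inner M (L M)"
proof (rule antisym)
  have ne: "{D. N D \<le> 1} \<noteq> {}" using norm_zero_is[OF assms(1)] by (metis (mono_tags) empty_Collect_eq order_refl zero_le_one)
  show "dual_norm N (-M) \<le> - inner M (L M)"
    unfolding dual_norm_def
  proof (rule cSUP_least[OF ne])
    fix D assume "D \<in> {D. N D \<le> 1}"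
    then show "inner (-M) D \<le> - inner M (L M)"
      using assms(2)[of M] unfolding is_argmin_ball_def by auto
  qed
  show "- inner M (L M) \<le> dual_norm N (-M)"
    using dual_upper[OF assms, of "L M" "-M"] assms(2)[of M]
    unfolding is_argmin_ball_def by auto
qed

lemma dual_ineq:
  assumes "is_norm N" "\<And>M'. is_argmin_ball N M' (L M')"
  shows "inner Y D \<le> N D * dual_norm N Y"
proof (cases "D = 0")
  case True
  then show ?thesis using norm_zero_is[OF assms(1)] by simp
next
  case False
  have "N D \<noteq> 0" "N D \<ge> 0" using assms(1) False unfolding is_norm_def by auto
  then have pos: "N D > 0" by simp
  have "N ((1 / N D) *\<^sub>R D) = \<bar>1 / N D\<bar> * N D"
    using assms(1) unfolding is_norm_def by blast
  then have "N ((1 / N D) *\<^sub>R D) = 1" using pos by simp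
  then have "inner Y ((1 / N D) *\<^sub>R D) \<le> dual_norm N Y"
    by (intro dual_upper[OF assms]) simp
  then have "inner Y D / N D \<le> dual_norm N Y" by simp
  then show ?thesis using pos by (simp add: divide_le_eq mult.commute)
qed

lemma dual_scale:
  assumes "is_norm N" "\<And>M'. is_argmin_ball N M' (L M')" "c > 0"
  shows "dual_norm N (c *\<^sub>R Y) = c * dual_norm N Y"
proof (rule antisym)
  have ne: "{D. N D \<le> 1} \<noteq> {}" using norm_zero_is[OF assms(1)] by (metis (mono_tags) empty_Collect_eq order_refl zero_le_one)
  show "dual_norm N (c *\<^sub>R Y) \<le> c * dual_norm N Y"
    unfolding dual_norm_def[of N "c *\<^sub>R Y"]
  proof (rule cSUP_least[OF ne])
    fix D assume "D \<in> {D. N D \<le> 1}"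
    then have "inner Y D \<le> dual_norm N Y" using dual_upper[OF assms(1,2)] by auto
    then show "inner (c *\<^sub>R Y) D \<le> c * dual_norm N Y"
      using assms(3) by simp
  qed
  have "dual_norm N Y \<le> dual_norm N (c *\<^sub>R Y) / c"
    unfolding dual_norm_def[of N Y]
  proof (rule cSUP_least[OF ne])
    fix D assume "D \<in> {D. N D \<le> 1}"
    then have "inner (c *\<^sub>R Y) D \<le> dual_norm N (c *\<^sub>R Y)"
      by (intro dual_upper[OF assms(1,2)]) simp
    then have "c * inner Y D \<le> dual_norm N (c *\<^sub>R Y)" by simp
    then show "inner Y D \<le> dual_norm N (c *\<^sub>R Y) / c"
      using assms(3) by (simp add: le_divide_eq mult.commute)
  qed
  then show "c * dual_norm N Y \<le> dual_norm N (c *\<^sub>R Y)"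
    using assms(3) by (simp add: le_divide_eq mult.commute)
qed

lemma dual_zero:
  assumes "is_norm N"
  shows "dual_norm N 0 = 0"
proof -
  have ne: "{D. N D \<le> 1} \<noteq> {}" using norm_zero_is[OF assms(1)] by (metis (mono_tags) empty_Collect_eq order_refl zero_le_one)
  show ?thesis unfolding dual_norm_def using ne by simp
qed

lemma dual_nonneg:
  assumes "is_norm N" "\<And>M'. is_argmin_ball N M' (L M')"
  shows "0 \<le> dual_norm N Y"
  using dual_upper[OF assms, of 0 Y] norm_zero_is[OF assms(1)] by simp

theorem lemma4:
  fixes n :: nat
    and N :: "nat \<Rightarrow> 'a::euclidean_space \<Rightarrow> real"
    and \<alpha> :: "nat \<Rightarrow> real"
    and LMO :: "nat \<Rightarrow> 'a \<Rightarrow> 'a"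
    and M :: 'a
  assumes norms: "\<And>i. i \<in> {1..n} \<Longrightarrow> is_norm (N i)"
    and nonneg: "\<And>i. i \<in> {1..n} \<Longrightarrow> 0 \<le> \<alpha> i"
    and not_all_zero: "\<exists>i\<in>{1..n}. \<alpha> i \<noteq> 0"
    and lmo: "\<And>i M'. i \<in> {1..n} \<Longrightarrow> is_argmin_ball (N i) M' (LMO i M')"
  shows "is_argmin_ball
           (dual_norm (\<lambda>X. \<Sum>i=1..n. \<alpha> i * dual_norm (N i) X))
           M (\<Sum>i=1..n. \<alpha> i *\<^sub>R LMO i M)"
proof -
  define P where "P = (\<lambda>X. \<Sum>i=1..n. \<alpha> i * dual_norm (N i) X)"
  define Xs where "Xs = (\<Sum>i=1..n. \<alpha> i *\<^sub>R LMO i M)"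
  obtain j where j: "j \<in> {1..n}" "\<alpha> j > 0"
    using not_all_zero nonneg by (metis order_le_less)
  have Pnn: "0 \<le> \<alpha> i * dual_norm (N i) X" if "i \<in> {1..n}" for i X
    using nonneg[OF that] dual_nonneg[OF norms[OF that] lmo[OF that]] by simp
  have Pge: "\<alpha> j * dual_norm (N j) X \<le> P X" for X
    unfolding P_def by (rule member_le_sum) (use j Pnn in auto)
  have P0: "P 0 = 0" unfolding P_def proof (intro sum.neutral ballI)
    fix i assume "i \<in> {1..n}"
    then show "\<alpha> i * dual_norm (N i) 0 = 0" using dual_zero[OF norms] by simp
  qed
  have Pscale: "P (c *\<^sub>R Y) = c * P Y" if "c > 0" for c Y
    unfolding P_def sum_distrib_left
    by (rule sum.cong) (use dual_scale[OF norms lmo that] in auto)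
  have neP: "{X. P X \<le> 1} \<noteq> {}" using P0 by (metis (mono_tags) empty_Collect_eq zero_le_one)
  have bdd: "bdd_above ((\<lambda>X. inner D X) ` {X. P X \<le> 1})" for D
  proof (rule bdd_aboveI2)
    fix X assume "X \<in> {X. P X \<le> 1}"
    then have "\<alpha> j * dual_norm (N j) X \<le> 1" using Pge[of X] by auto
    then have d: "dual_norm (N j) X \<le> 1 / \<alpha> j" using j by (simp add: le_divide_eq mult.commute)
    have "inner X D \<le> N j D * dual_norm (N j) X" by (rule dual_ineq[OF norms[OF j(1)] lmo[OF j(1)]])
    also have "\<dots> \<le> N j D * (1 / \<alpha> j)"
      by (rule mult_left_mono[OF d]) (use norms[OF j(1)] in \<open>auto simp: is_norm_def\<close>)
    finally show "inner D X \<le> N j D * (1 / \<alpha> j)" by (simp add: inner_commute)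
  qed
  have c1: "dual_norm P Xs \<le> 1"
    unfolding dual_norm_def
  proof (rule cSUP_least[OF neP])
    fix X assume X: "X \<in> {X. P X \<le> 1}"
    have "inner Xs X = (\<Sum>i=1..n. \<alpha> i * inner (LMO i M) X)"
      unfolding Xs_def by (simp add: inner_sum_left)
    also have "\<dots> \<le> P X" unfolding P_def
    proof (rule sum_mono)
      fix i assume i: "i \<in> {1..n}"
      have "inner X (LMO i M) \<le> dual_norm (N i) X"
        using dual_upper[OF norms[OF i] lmo[OF i]] lmo[OF i, of M]
        unfolding is_argmin_ball_def by auto
      then show "\<alpha> i * inner (LMO i M) X \<le> \<alpha> i * dual_norm (N i) X"
        using nonneg[OF i] by (simp add: inner_commute mult_left_mono)
    qed
    finally show "inner Xs X \<le> 1" using X by simp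
  qed
  have c2: "inner M Xs \<le> inner M D" if D: "dual_norm P D \<le> 1" for D
  proof -
    define Y where "Y = - M"
    have key: "inner D Y \<le> P Y"
    proof (cases "P Y > 0")
      case True
      have "P ((1 / P Y) *\<^sub>R Y) = 1" using Pscale[of "1 / P Y" Y] True by simp
      then have "inner D ((1 / P Y) *\<^sub>R Y) \<le> dual_norm P D"
        unfolding dual_norm_def by (intro cSUP_upper bdd) auto
      then have "inner D Y / P Y \<le> 1" using D by simp
      then show ?thesis using True by (simp add: divide_le_eq)
    next
      case False
      have "P Y \<ge> 0" unfolding P_def by (rule sum_nonneg) (use Pnn in auto)
      with False have "\<alpha> j * dual_norm (N j) Y \<le> 0" using Pge[of Y] by simp
      then have "dual_norm (N j) Y \<le> 0" using j by (simp add: mult_le_0_iff)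
      moreover have "inner Y Y \<le> N j Y * dual_norm (N j) Y"
        by (rule dual_ineq[OF norms[OF j(1)] lmo[OF j(1)]])
      moreover have "N j Y \<ge> 0" using norms[OF j(1)] by (simp add: is_norm_def)
      ultimately have "inner Y Y \<le> 0" by (meson mult_nonneg_nonpos order_trans)
      then have "Y = 0" by (metis inner_eq_zero_iff inner_ge_zero order_antisym)
      then show ?thesis using P0 by simp
    qed
    have "inner M Xs = (\<Sum>i=1..n. \<alpha> i * inner M (LMO i M))"
      unfolding Xs_def by (simp add: inner_sum_right)
    also have "\<dots> = - P Y" unfolding P_def Y_def sum_negf[symmetric]
      by (rule sum.cong) (use dual_neg[OF norms lmo] in auto)
    also have "\<dots> \<le> inner M D" using key unfolding Y_def by (simp add: inner_commute)
    finally show ?thesis .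
  qed
  show ?thesis
    unfolding is_argmin_ball_def P_def[symmetric] Xs_def[symmetric]
    using c1 c2 by auto
qed

end
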